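(* For any even positive integer $n\geq 4$, $\Delta_D(D_{2n})=\mathcal{P}_e(D_{2n})$.
   Context: $D_{2n}=\langle a,b\mid a^n=b^2=e,\ ab=ba^{-1}\rangle$ ($n\geq 3$). The enhanced power graph $\mathcal{P}_e(G)$ has vertex set $G$ with distinct $x,y$ adjacent iff $\langle x,y\rangle$ is cyclic. The deep commuting graph $\Delta_D(G)$ has vertex set $G$, distinct vertices adjacent iff their preimages commute in a Schur cover $\tilde G$ of $G$ (a central extension $\{e\}\to M(G)\to\tilde G\to G\to\{e\}$ with kernel contained in $Z(\tilde G)\cap[\tilde G,\tilde G]$, of maximal order; $M(G)$ the Schur multiplier). *)

theory Defs
  imports "HOL-Algebra.Algebra"
begin

text \<open>The dihedral group of order 2n, realised concretely: the pair (i, s) stands for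
  a^i b^s (0 \<le> i < n, s a boolean exponent of b).  Using b a^j = a^(-j) b we get
  (a^i b^s)(a^j b^t) = a^(i \<plusminus> j) b^(s+t).\<close>
definition dihedral_group :: "nat \<Rightarrow> (nat \<times> bool) monoid" where
  "dihedral_group n =
     \<lparr> carrier = {(i, s). i < n},
       monoid.mult = (\<lambda>(i, s) (j, t). ((if s then i + n - j else i + j) mod n, s \<noteq> t)),
       one = (0, False) \<rparr>"

definition group_center :: "('a, 'b) monoid_scheme \<Rightarrow> 'a set" where
  "group_center G = {z \<in> carrier G. \<forall>g \<in> carrier G. z \<otimes>\<^bsub>G\<^esub> g = g \<otimes>\<^bsub>G\<^esub> z}"

definition stem_extension ::
  "('c, 'd) monoid_scheme \<Rightarrow> ('a, 'b) monoid_scheme \<Rightarrow> ('c \<Rightarrow> 'a) \<Rightarrow> bool" where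
  "stem_extension H G q \<longleftrightarrow>
     group H \<and> q \<in> epi H G \<and>
     kernel H G q \<subseteq> group_center H \<inter> derived H (carrier H)"

text \<open>Every finite group is isomorphic to one whose carrier
  consists of natural numbers, so it suffices to compare with extensions carried by nat.\<close>
definition schur_cover ::
  "('c, 'd) monoid_scheme \<Rightarrow> ('a, 'b) monoid_scheme \<Rightarrow> ('c \<Rightarrow> 'a) \<Rightarrow> bool" where
  "schur_cover H G q \<longleftrightarrow>
     stem_extension H G q \<and> finite (carrier H) \<and>
     (\<forall>(H' :: nat monoid) (q' :: nat \<Rightarrow> 'a).
        stem_extension H' G q' \<and> finite (carrier H') \<longrightarrow>
        card (kernel H' G q') \<le> card (kernel H G q))"

definition enhanced_power_graph :: "('a, 'b) monoid_scheme \<Rightarrow> ('a \<times> 'a) set" where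
  "enhanced_power_graph G =
     {(x, y). x \<in> carrier G \<and> y \<in> carrier G \<and> x \<noteq> y \<and>
              cyclic_group (subgroup_generated G {x, y})}"

definition deep_commuting_graph ::
  "('c, 'd) monoid_scheme \<Rightarrow> ('a, 'b) monoid_scheme \<Rightarrow> ('c \<Rightarrow> 'a) \<Rightarrow> ('a \<times> 'a) set" where
  "deep_commuting_graph H G q =
     {(x, y). x \<in> carrier G \<and> y \<in> carrier G \<and> x \<noteq> y \<and>
              (\<exists>x' \<in> carrier H. \<exists>y' \<in> carrier H. q x' = x \<and> q y' = y \<and>
                  x' \<otimes>\<^bsub>H\<^esub> y' = y' \<otimes>\<^bsub>H\<^esub> x')}"

end

theory Submission
  imports Defs
begin

definition delt :: "nat \<Rightarrow> int \<Rightarrow> bool \<Rightarrow> nat \<times> bool" where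
  "delt n k s = (nat (k mod int n), s)"

lemma delt_carrier: "0 < n \<Longrightarrow> delt n k s \<in> carrier (dihedral_group n)"
  by (simp add: delt_def dihedral_group_def nat_less_iff)

lemma carrier_delt: "x \<in> carrier (dihedral_group n) \<Longrightarrow> x = delt n (int (fst x)) (snd x)"
  by (auto simp: delt_def dihedral_group_def zmod_int)

lemma delt_eq: "0 < n \<Longrightarrow> delt n k s = delt n l t \<longleftrightarrow> (k mod int n = l mod int n \<and> s = t)"
  by (simp add: delt_def eq_nat_nat_iff)

lemma dih_one: "\<one>\<^bsub>dihedral_group n\<^esub> = delt n 0 False"
  by (simp add: delt_def dihedral_group_def)

lemma delt_mult: assumes "0 < n"
  shows "delt n k s \<otimes>\<^bsub>dihedral_group n\<^esub> delt n l t = delt n (if s then k - l else k + l) (s \<noteq> t)"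
proof -
  have a: "nat (l mod int n) \<le> n" using assms
    using pos_mod_bound[of "int n" l] by linarith
  show ?thesis
  proof (cases s)
    case True
    have "int ((nat (k mod int n) + n - nat (l mod int n)) mod n) = (k - l) mod int n"
    proof -
      have e: "k mod int n + int n - l mod int n = (k mod int n - l mod int n) + int n" by simp
      have f: "int (nat (k mod int n) + n - nat (l mod int n)) = k mod int n + int n - l mod int n"
        using a assms by (simp add: of_nat_diff)
      show ?thesis
        by (simp only: zmod_int f e mod_add_self2 mod_diff_eq)
    qed
    then show ?thesis using True by (simp add: delt_def dihedral_group_def)
  next
    case False
    have "int ((nat (k mod int n) + nat (l mod int n)) mod n) = (k + l) mod int n"
      using assms by (simp add: zmod_int mod_add_eq)
    then show ?thesis using False by (simp add: delt_def dihedral_group_def)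
  qed
qed

lemma dih_cases: assumes "x \<in> carrier (dihedral_group n)"
  obtains k s where "x = delt n k s"
  using carrier_delt[OF assms] by blast

lemma dih_group: assumes "0 < n" shows "group (dihedral_group n)"
proof (rule groupI)
  fix x y assume "x \<in> carrier (dihedral_group n)" "y \<in> carrier (dihedral_group n)"
  then show "x \<otimes>\<^bsub>dihedral_group n\<^esub> y \<in> carrier (dihedral_group n)"
    by (metis dih_cases delt_mult delt_carrier assms)
next
  show "\<one>\<^bsub>dihedral_group n\<^esub> \<in> carrier (dihedral_group n)"
    by (simp add: dih_one delt_carrier assms)
next
  fix x y z assume "x \<in> carrier (dihedral_group n)" "y \<in> carrier (dihedral_group n)" "z \<in> carrier (dihedral_group n)"
  then obtain a b c s t u where "x = delt n a s" "y = delt n b t" "z = delt n c u"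
    by (metis dih_cases)
  then show "x \<otimes>\<^bsub>dihedral_group n\<^esub> y \<otimes>\<^bsub>dihedral_group n\<^esub> z = x \<otimes>\<^bsub>dihedral_group n\<^esub> (y \<otimes>\<^bsub>dihedral_group n\<^esub> z)"
    using assms by (cases s; cases t; simp add: delt_mult algebra_simps)
next
  fix x assume "x \<in> carrier (dihedral_group n)"
  then obtain a s where x: "x = delt n a s" by (metis dih_cases)
  then show "\<one>\<^bsub>dihedral_group n\<^esub> \<otimes>\<^bsub>dihedral_group n\<^esub> x = x"
    using assms by (simp add: dih_one delt_mult)
  show "\<exists>y\<in>carrier (dihedral_group n). y \<otimes>\<^bsub>dihedral_group n\<^esub> x = \<one>\<^bsub>dihedral_group n\<^esub>"
    using assms x
    by (intro bexI[of _ "delt n (if s then a else - a) s"]) (auto simp: dih_one delt_mult delt_eq delt_carrier)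
qed

lemma dih_inv: assumes "0 < n"
  shows "inv\<^bsub>dihedral_group n\<^esub> (delt n k s) = delt n (if s then k else - k) s"
  using assms by (intro group.inv_equality[OF dih_group]) (auto simp: dih_one delt_mult delt_eq delt_carrier)

lemma dih_pow_nat: assumes "0 < n"
  shows "(delt n k False) [^]\<^bsub>dihedral_group n\<^esub> (j::nat) = delt n (k * int j) False"
proof (induction j)
  case 0 then show ?case by (simp add: dih_one)
next
  case (Suc j) then show ?case using assms by (simp add: delt_mult algebra_simps)
qed

lemma dih_pow_int: assumes "0 < n"
  shows "(delt n k False) [^]\<^bsub>dihedral_group n\<^esub> (j::int) = delt n (k * j) False"
proof (cases "j < 0")
  case True
  have e: "j = - int (nat (- j))" using True by simp
  have "(delt n k False) [^]\<^bsub>dihedral_group n\<^esub> j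
     = inv\<^bsub>dihedral_group n\<^esub> ((delt n k False) [^]\<^bsub>dihedral_group n\<^esub> (nat (- j)))"
    by (subst e, rule group.int_pow_neg_int[OF dih_group[OF assms] delt_carrier[OF assms]])
  also have "\<dots> = inv\<^bsub>dihedral_group n\<^esub> (delt n (k * int (nat (- j))) False)"
    by (simp only: dih_pow_nat[OF assms])
  also have "\<dots> = delt n (k * j) False" using assms True by (simp add: dih_inv)
  finally show ?thesis .
next
  case False
  have e: "j = int (nat j)" using False by simp
  have "(delt n k False) [^]\<^bsub>dihedral_group n\<^esub> j
     = (delt n k False) [^]\<^bsub>dihedral_group n\<^esub> (nat j)"
    by (subst e, rule int_pow_int)
  also have "\<dots> = delt n (k * int (nat j)) False"
    by (simp only: dih_pow_nat[OF assms])
  also have "\<dots> = delt n (k * j) False" using assms False by simp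
  finally show ?thesis .
qed

definition cmt :: "('a, 'b) monoid_scheme \<Rightarrow> 'a \<Rightarrow> 'a \<Rightarrow> 'a" where
  "cmt G x y = x \<otimes>\<^bsub>G\<^esub> y \<otimes>\<^bsub>G\<^esub> inv\<^bsub>G\<^esub> x \<otimes>\<^bsub>G\<^esub> inv\<^bsub>G\<^esub> y"

context group begin

lemma lcanc [simp]: "x \<in> carrier G \<Longrightarrow> y \<in> carrier G \<Longrightarrow> inv x \<otimes> (x \<otimes> y) = y"
  by (simp add: m_assoc[symmetric])

lemma rcanc [simp]: "x \<in> carrier G \<Longrightarrow> y \<in> carrier G \<Longrightarrow> x \<otimes> (inv x \<otimes> y) = y"
  by (simp add: m_assoc[symmetric])

lemma cmt_closed [simp]: "x \<in> carrier G \<Longrightarrow> y \<in> carrier G \<Longrightarrow> cmt G x y \<in> carrier G"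
  by (simp add: cmt_def)

lemma cmt_inv: "x \<in> carrier G \<Longrightarrow> y \<in> carrier G \<Longrightarrow> inv (cmt G x y) = cmt G y x"
  by (simp add: cmt_def inv_mult_group m_assoc)

lemma cmt_eq: "x \<in> carrier G \<Longrightarrow> y \<in> carrier G \<Longrightarrow> cmt G x y = (x \<otimes> y) \<otimes> inv (y \<otimes> x)"
  by (simp add: cmt_def inv_mult_group m_assoc)

lemma cmt_one_iff: "x \<in> carrier G \<Longrightarrow> y \<in> carrier G \<Longrightarrow> cmt G x y = \<one> \<longleftrightarrow> x \<otimes> y = y \<otimes> x"
  by (simp add: cmt_eq inv_solve_right')

lemma cmt_mult_left: "x \<in> carrier G \<Longrightarrow> y \<in> carrier G \<Longrightarrow> z \<in> carrier G \<Longrightarrow>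
    cmt G (x \<otimes> y) z = x \<otimes> cmt G y z \<otimes> inv x \<otimes> cmt G x z"
  by (simp add: cmt_def inv_mult_group m_assoc)

lemma cmt_mult_right: "x \<in> carrier G \<Longrightarrow> y \<in> carrier G \<Longrightarrow> z \<in> carrier G \<Longrightarrow>
    cmt G x (y \<otimes> z) = cmt G x y \<otimes> y \<otimes> cmt G x z \<otimes> inv y"
  by (simp add: cmt_def inv_mult_group m_assoc)

lemma conj_comm: "x \<in> carrier G \<Longrightarrow> c \<in> carrier G \<Longrightarrow> c \<otimes> x = x \<otimes> c \<Longrightarrow> x \<otimes> c \<otimes> inv x = c"
  by (metis m_assoc r_inv r_one inv_closed)

lemma conj_comm_inv: "x \<in> carrier G \<Longrightarrow> c \<in> carrier G \<Longrightarrow> c \<otimes> x = x \<otimes> c \<Longrightarrow> x \<otimes> inv c \<otimes> inv x = inv c"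
proof -
  assume a: "x \<in> carrier G" "c \<in> carrier G" "c \<otimes> x = x \<otimes> c"
  have "inv (x \<otimes> c \<otimes> inv x) = x \<otimes> inv c \<otimes> inv x" using a by (simp add: inv_mult_group m_assoc)
  then show ?thesis using conj_comm[OF a] by simp
qed

lemma cmt_central_left:
  assumes k: "k \<in> carrier G" "\<And>g. g \<in> carrier G \<Longrightarrow> k \<otimes> g = g \<otimes> k"
    and xy: "x \<in> carrier G" "y \<in> carrier G"
  shows "cmt G (k \<otimes> x) y = cmt G x y"
proof -
  have "cmt G k y = \<one>" using k xy by (simp add: cmt_one_iff)
  moreover have "k \<otimes> cmt G x y \<otimes> inv k = cmt G x y"
    using k xy by (intro conj_comm) (simp_all add: k(2)[symmetric])
  ultimately show ?thesis using k xy by (simp add: cmt_mult_left)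
qed

lemma cmt_central_right:
  assumes k: "k \<in> carrier G" "\<And>g. g \<in> carrier G \<Longrightarrow> k \<otimes> g = g \<otimes> k"
    and xy: "x \<in> carrier G" "y \<in> carrier G"
  shows "cmt G x (k \<otimes> y) = cmt G x y"
proof -
  have "cmt G x (k \<otimes> y) = inv (cmt G (k \<otimes> y) x)" using k xy by (simp add: cmt_inv)
  also have "\<dots> = inv (cmt G y x)" using cmt_central_left[OF k xy(2,1)] by simp
  also have "\<dots> = cmt G x y" using xy by (simp add: cmt_inv)
  finally show ?thesis .
qed

end

context group begin

lemma core:
  fixes q :: "'a \<Rightarrow> nat \<times> bool" and n :: nat
  assumes ev: "even n" and n4: "4 \<le> n"
    and hq: "q \<in> hom G (dihedral_group n)" and sq: "q ` carrier G = carrier (dihedral_group n)"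
    and Kc: "kernel G (dihedral_group n) q \<subseteq> group_center G"
    and Kd: "kernel G (dihedral_group n) q \<subseteq> derived G (carrier G)"
    and K2: "2 \<le> card (kernel G (dihedral_group n) q)"
    and bc: "b \<in> carrier G" and bq: "snd (q b) = True"
    and uc: "u \<in> carrier G" and uq: "q u = delt n (int (n div 2)) False"
  shows "b \<otimes> u \<noteq> u \<otimes> b"
proof
  assume comm: "b \<otimes> u = u \<otimes> b"
  have n0: "0 < n" using n4 by simp
  interpret h: group_hom G "dihedral_group n" q
    by (simp add: group_hom_def group_hom_axioms_def is_group dih_group[OF n0] hq)
  define K where "K = kernel G (dihedral_group n) q"
  define m where "m = n div 2"
  have nm: "n = 2 * m" using ev by (simp add: m_def)
  have Kcar: "\<And>k. k \<in> K \<Longrightarrow> k \<in> carrier G" by (simp add: K_def kernel_def)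
  have Kcen: "\<And>k g. k \<in> K \<Longrightarrow> g \<in> carrier G \<Longrightarrow> k \<otimes> g = g \<otimes> k"
    using Kc by (auto simp: K_def group_center_def)
  have same: "\<exists>k\<in>K. x = k \<otimes> y" if xy: "x \<in> carrier G" "y \<in> carrier G" "q x = q y" for x y
  proof -
    have "x \<otimes> inv y \<in> K" using xy by (simp add: K_def kernel_def)
    moreover have "x = (x \<otimes> inv y) \<otimes> y" using xy by (simp add: m_assoc)
    ultimately show ?thesis by blast
  qed
  have cmt_img: "cmt G x y = cmt G x' y'"
    if c: "x \<in> carrier G" "y \<in> carrier G" "x' \<in> carrier G" "y' \<in> carrier G"
      and e: "q x = q x'" "q y = q y'" for x y x' y'
  proof -
    obtain k where k: "k \<in> K" "x = k \<otimes> x'" using same[OF c(1,3) e(1)] by blast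
    obtain k' where k': "k' \<in> K" "y = k' \<otimes> y'" using same[OF c(2,4) e(2)] by blast
    have "cmt G x y = cmt G x' (k' \<otimes> y')"
      using k k' c Kcar Kcen by (simp add: cmt_central_left)
    also have "\<dots> = cmt G x' y'"
      using k' c Kcar Kcen by (simp add: cmt_central_right)
    finally show ?thesis .
  qed
  obtain a where ac: "a \<in> carrier G" and aq: "q a = delt n 1 False"
    using sq delt_carrier[OF n0, of 1 False] by (metis imageE)
  have qbc: "q b \<in> carrier (dihedral_group n)" using bc by simp
  define i0 where "i0 = int (fst (q b))"
  have bq': "q b = delt n i0 True" using carrier_delt[OF qbc] bq by (simp add: i0_def)
  define g where "g = cmt G a b"
  have gc: "g \<in> carrier G" using ac bc by (simp add: g_def)
  have gq: "q g = delt n 2 False"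
    using n0 ac bc by (simp add: g_def cmt_def bq' aq delt_mult dih_inv delt_eq)
  have ga: "g \<otimes> a = a \<otimes> g"
  proof -
    define w where "w = b \<otimes> inv a \<otimes> inv b"
    have wc: "w \<in> carrier G" using ac bc by (simp add: w_def)
    have "q w = q a" using n0 ac bc by (simp add: w_def bq' aq delt_mult dih_inv delt_eq)
    then obtain k where k: "k \<in> K" "w = k \<otimes> a" using same[OF wc ac] by blast
    have kc: "k \<in> carrier G" using Kcar k by simp
    have "g = a \<otimes> w" using ac bc by (simp add: g_def w_def cmt_def m_assoc)
    then have "g = a \<otimes> (a \<otimes> k)" using k Kcen[OF k(1) ac] by simp
    then show ?thesis using ac kc Kcen[OF k(1) ac] by (simp add: m_assoc)
  qed
  have ag: "a [^] j \<otimes> g = g \<otimes> a [^] j" for j :: nat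
    using group_commutes_pow[OF ga[symmetric] ac gc] .
  have gpow_a: "g [^] j \<otimes> a [^] l = a [^] l \<otimes> g [^] j" for j l :: nat
    using group_commutes_pow[OF ag[symmetric] gc] ac by simp
  have cj: "cmt G (a [^] j) b = g [^] j" for j :: nat
  proof (induction j)
    case 0 then show ?case using bc by (simp add: cmt_def)
  next
    case (Suc j)
    have "cmt G (a [^] Suc j) b = a [^] j \<otimes> g \<otimes> inv (a [^] j) \<otimes> cmt G (a [^] j) b"
      using ac bc by (simp add: cmt_mult_left g_def)
    also have "\<dots> = g \<otimes> g [^] j" using conj_comm[OF _ gc ag[symmetric]] ac Suc by simp
    also have "\<dots> = g [^] Suc j" using gc by (rule nat_pow_Suc2[symmetric])
    finally show ?case .
  qed
  have qam: "q (a [^] m) = delt n (int m) False" using ac n0 by (simp add: h.hom_nat_pow aq dih_pow_nat)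
  have gm: "g [^] m = \<one>"
  proof -
    have "cmt G b u = \<one>" using comm bc uc by (simp add: cmt_one_iff)
    then have "cmt G u b = \<one>" using bc uc cmt_inv[OF bc uc] by simp
    moreover have "q u = q (a [^] m)" using qam uq by (simp add: m_def)
    then have "cmt G u b = cmt G (a [^] m) b"
      using cmt_img[OF uc bc _ bc _ refl] ac by simp
    ultimately show ?thesis using cj by simp
  qed
  define S where "S = generate G {g}"
  have Ssub: "subgroup S G" using gc by (simp add: S_def generate_is_subgroup)
  have gjS: "g [^] j \<in> S" for j :: nat
    using gc by (simp add: S_def generate_pow) (metis int_pow_int)
  have rep: "\<exists>(j::nat) s. q x = q (if s then a [^] j \<otimes> b else a [^] j)" if xc: "x \<in> carrier G" for x
  proof -
    have qxc: "q x \<in> carrier (dihedral_group n)" using xc by simp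
    show ?thesis
    proof (cases "snd (q x)")
      case True
      define j where "j = nat ((int (fst (q x)) - i0) mod int n)"
      have "q (a [^] j \<otimes> b) = delt n (int j + i0) True"
        using ac bc n0 by (simp add: h.hom_nat_pow aq dih_pow_nat bq' delt_mult)
      also have "\<dots> = q x"
      proof -
        have "int j = (int (fst (q x)) - i0) mod int n" using n0 by (simp add: j_def)
        then have "(int j + i0) mod int n = int (fst (q x)) mod int n"
          by (simp add: mod_add_left_eq)
        then have "delt n (int j + i0) True = delt n (int (fst (q x))) True" using n0 by (simp add: delt_eq)
        also have "\<dots> = q x" using carrier_delt[OF qxc] True by simp
        finally show ?thesis .
      qed
      finally have "q (a [^] j \<otimes> b) = q x" .
      then have "q x = q (if True then a [^] j \<otimes> b else a [^] j)" by simp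
      then show ?thesis by blast
    next
      case False
      have "q (a [^] (fst (q x))) = q x"
        using ac n0 carrier_delt[OF qxc] False by (simp add: h.hom_nat_pow aq dih_pow_nat)
      then have "q x = q (if False then a [^] (fst (q x)) \<otimes> b else a [^] (fst (q x)))" by simp
      then show ?thesis by blast
    qed
  qed
  have cmt_S: "cmt G x y \<in> S" if xc: "x \<in> carrier G" and yc: "y \<in> carrier G" for x y
  proof -
    obtain j :: nat and s where js: "q x = q (if s then a [^] j \<otimes> b else a [^] j)" using rep[OF xc] by blast
    obtain l :: nat and t where lt: "q y = q (if t then a [^] l \<otimes> b else a [^] l)" using rep[OF yc] by blast
    have e: "cmt G x y = cmt G (if s then a [^] j \<otimes> b else a [^] j) (if t then a [^] l \<otimes> b else a [^] l)"
      using cmt_img[OF xc yc _ _ js lt] ac bc by simp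
    have FF: "cmt G (a [^] j') (a [^] l') = \<one>" for j' l' :: nat
      using ac by (simp add: cmt_one_iff nat_pow_mult add.commute)
    have FT: "cmt G (a [^] j') (a [^] l' \<otimes> b) = g [^] j'" for j' l' :: nat
    proof -
      have "cmt G (a [^] j') (a [^] l' \<otimes> b) = \<one> \<otimes> a [^] l' \<otimes> g [^] j' \<otimes> inv (a [^] l')"
        using ac bc by (simp add: cmt_mult_right FF cj)
      also have "\<dots> = g [^] j'" using ac gc conj_comm[OF _ _ gpow_a] by simp
      finally show ?thesis .
    qed
    have TF: "cmt G (a [^] j' \<otimes> b) (a [^] l') = inv (g [^] l')" for j' l' :: nat
      using ac bc by (simp add: cmt_inv[symmetric] FT)
    have TT: "cmt G (a [^] j' \<otimes> b) (a [^] l' \<otimes> b) = inv (g [^] l') \<otimes> g [^] j'" for j' l' :: nat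
    proof -
      have bb: "cmt G b b = \<one>" using bc by (simp add: cmt_one_iff)
      have "cmt G (a [^] l' \<otimes> b) b = g [^] l'"
        using ac bc gc by (simp add: cmt_mult_left bb cj)
      then have "cmt G b (a [^] l' \<otimes> b) = inv (g [^] l')"
        using ac bc by (metis cmt_inv m_closed nat_pow_closed)
      then have "cmt G (a [^] j' \<otimes> b) (a [^] l' \<otimes> b)
          = a [^] j' \<otimes> inv (g [^] l') \<otimes> inv (a [^] j') \<otimes> g [^] j'"
        using ac bc by (simp add: cmt_mult_left FT)
      also have "\<dots> = inv (g [^] l') \<otimes> g [^] j'"
        using conj_comm_inv[OF _ _ gpow_a] ac gc by simp
      finally show ?thesis .
    qed
    show ?thesis
      using e FF FT TF TT gjS Ssub
      by (cases s; cases t) (simp_all add: subgroup.one_closed subgroup.m_inv_closed subgroup.m_closed)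
  qed
  have derS: "derived G (carrier G) \<subseteq> S"
    unfolding derived_def
    by (rule generate_subgroup_incl[OF _ Ssub]) (auto simp: cmt_S[unfolded cmt_def])
  have Ktriv: "K \<subseteq> {\<one>}"
  proof
    fix x assume xK: "x \<in> K"
    then have "x \<in> S" using Kd derS by (auto simp: K_def)
    then obtain k :: int where xk: "x = g [^] k" using gc by (auto simp: S_def generate_pow)
    have m0: "0 < m" using nm n0 by simp
    define j where "j = nat (k mod int m)"
    have kj: "k = int m * (k div int m) + int j" using m0 by (simp add: j_def)
    have "(g [^] (int m)) [^] (k div int m) \<otimes> g [^] (int j) = g [^] (int m * (k div int m)) \<otimes> g [^] (int j)"
      using gc by (simp add: int_pow_pow)
    also have "\<dots> = g [^] (int m * (k div int m) + int j)" using gc by (simp add: int_pow_mult)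
    also have "\<dots> = x" using kj xk by simp
    finally have "x = (g [^] (int m)) [^] (k div int m) \<otimes> g [^] (int j)" by simp
    also have "\<dots> = g [^] j" using gm gc by (simp add: int_pow_int)
    finally have xj: "x = g [^] j" .
    have jm: "j < m"
    proof -
      have "k mod int m < int m" "0 \<le> k mod int m" using m0 by simp_all
      then show ?thesis unfolding j_def by linarith
    qed
    have "q x = delt n 0 False" using xK by (simp add: K_def kernel_def dih_one)
    moreover have "q x = delt n (2 * int j) False" using gc n0 by (simp add: xj h.hom_nat_pow gq dih_pow_nat)
    ultimately have "(2 * int j) mod int n = 0" using n0 by (simp add: delt_eq)
    then have "j = 0" using jm nm by (simp add: mod_pos_pos_trivial)
    then show "x \<in> {\<one>}" using xj by simp
  qed
  have "card K \<le> card {\<one>}" using Ktriv by (intro card_mono) auto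
  then show False using K2 by (simp add: K_def)
qed

end

lemma snd_delt [simp]: "snd (delt n k s) = s" by (simp add: delt_def)

lemma rot_subgroup: assumes n0: "0 < n"
  shows "subgroup {w \<in> carrier (dihedral_group n). snd w = False} (dihedral_group n)"
proof -
  have G: "group (dihedral_group n)" by (rule dih_group[OF n0])
  show ?thesis
  proof (rule group.subgroupI[OF G])
    show "{w \<in> carrier (dihedral_group n). snd w = False} \<noteq> {}"
    proof -
      have "delt n 0 False \<in> {w \<in> carrier (dihedral_group n). snd w = False}"
        using delt_carrier[OF n0, of 0 False] by (simp add: delt_def)
      then show ?thesis by blast
    qed
  next
    fix a assume "a \<in> {w \<in> carrier (dihedral_group n). snd w = False}"
    then have a1: "a \<in> carrier (dihedral_group n)" "snd a = False" by auto
    then have e: "a = delt n (int (fst a)) False" using carrier_delt[OF a1(1)] by simp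
    have "inv\<^bsub>dihedral_group n\<^esub> a = delt n (- int (fst a)) False" using n0 by (subst e, simp add: dih_inv)
    then show "inv\<^bsub>dihedral_group n\<^esub> a \<in> {w \<in> carrier (dihedral_group n). snd w = False}"
      using n0 by (simp add: delt_carrier)
  next
    fix a b assume "a \<in> {w \<in> carrier (dihedral_group n). snd w = False}" "b \<in> {w \<in> carrier (dihedral_group n). snd w = False}"
    then have a1: "a \<in> carrier (dihedral_group n)" "snd a = False" "b \<in> carrier (dihedral_group n)" "snd b = False" by auto
    then have e: "a = delt n (int (fst a)) False" "b = delt n (int (fst b)) False"
      using carrier_delt[OF a1(1)] carrier_delt[OF a1(3)] by simp_all
    have "a \<otimes>\<^bsub>dihedral_group n\<^esub> b = delt n (int (fst a) + int (fst b)) False"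
      using n0 by (subst e(1), subst e(2), simp add: delt_mult)
    then show "a \<otimes>\<^bsub>dihedral_group n\<^esub> b \<in> {w \<in> carrier (dihedral_group n). snd w = False}"
      using n0 by (simp add: delt_carrier)
  qed auto
qed

lemma refl_subgroup: assumes n0: "0 < n" and zc: "z \<in> carrier (dihedral_group n)" and zs: "snd z"
  shows "subgroup {\<one>\<^bsub>dihedral_group n\<^esub>, z} (dihedral_group n)"
proof -
  have G: "group (dihedral_group n)" by (rule dih_group[OF n0])
  obtain k where zk0: "z = delt n k (snd z)" using carrier_delt[OF zc] by blast
  have zk: "z = delt n k True" using zk0 zs by simp
  have zz: "z \<otimes>\<^bsub>dihedral_group n\<^esub> z = \<one>\<^bsub>dihedral_group n\<^esub>" using n0 by (simp add: zk delt_mult dih_one)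
  have iz: "inv\<^bsub>dihedral_group n\<^esub> z = z" using n0 by (simp add: zk dih_inv)
  show ?thesis
    by (rule group.subgroupI[OF G]) (use n0 in \<open>auto simp: zk dih_one delt_mult dih_inv delt_carrier\<close>)
qed

lemma not_cyclic:
  assumes n0: "0 < n" and xc: "x \<in> carrier (dihedral_group n)" and yc: "y \<in> carrier (dihedral_group n)"
    and xs: "snd x" and y1: "y \<noteq> \<one>\<^bsub>dihedral_group n\<^esub>" and yx: "y \<noteq> x"
  shows "\<not> cyclic_group (subgroup_generated (dihedral_group n) {x, y})"
proof
  assume cyc: "cyclic_group (subgroup_generated (dihedral_group n) {x, y})"
  have G: "group (dihedral_group n)" by (rule dih_group[OF n0])
  define T where "T = generate (dihedral_group n) {x, y}"
  have Tsub: "subgroup T (dihedral_group n)" using xc yc by (simp add: T_def group.generate_is_subgroup[OF G])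
  have SG: "subgroup_generated (dihedral_group n) {x, y} = (dihedral_group n)\<lparr>carrier := T\<rparr>"
    using xc yc by (simp add: subgroup_generated_def T_def Int_absorb1)
  obtain z where zT: "z \<in> T" and zgen: "subgroup_generated ((dihedral_group n)\<lparr>carrier := T\<rparr>) {z} = (dihedral_group n)\<lparr>carrier := T\<rparr>"
    using cyc unfolding cyclic_group_def SG by auto
  have "T = carrier (subgroup_generated ((dihedral_group n)\<lparr>carrier := T\<rparr>) {z})" using zgen by simp
  also have "\<dots> = generate ((dihedral_group n)\<lparr>carrier := T\<rparr>) {z}"
    using zT by (simp add: carrier_subgroup_generated)
  also have "\<dots> = generate (dihedral_group n) {z}"
    using zT Tsub by (simp add: group.generate_consistent[OF G])
  finally have Tz: "T = generate (dihedral_group n) {z}" .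
  have zc: "z \<in> carrier (dihedral_group n)" using zT Tsub subgroup.subset by blast
  have xT: "x \<in> T" "y \<in> T" by (simp_all add: T_def generate.incl)
  show False
  proof (cases "snd z")
    case False
    have "T \<subseteq> {w \<in> carrier (dihedral_group n). snd w = False}"
      unfolding Tz using zc False by (intro group.generate_subgroup_incl[OF G] rot_subgroup[OF n0]) auto
    then show False using xT xs by auto
  next
    case True
    have "T \<subseteq> {\<one>\<^bsub>dihedral_group n\<^esub>, z}"
      unfolding Tz using zc True by (intro group.generate_subgroup_incl[OF G] refl_subgroup[OF n0]) auto
    moreover have "x \<noteq> \<one>\<^bsub>dihedral_group n\<^esub>" using xs by (auto simp: dih_one delt_def)
    ultimately show False using xT y1 yx by auto
  qed
qed

lemma cyclic_one:
  assumes n0: "0 < n" and yc: "y \<in> carrier (dihedral_group n)"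
  shows "cyclic_group (subgroup_generated (dihedral_group n) {\<one>\<^bsub>dihedral_group n\<^esub>, y})"
proof -
  have G: "group (dihedral_group n)" by (rule dih_group[OF n0])
  have "generate (dihedral_group n) {\<one>\<^bsub>dihedral_group n\<^esub>, y} = generate (dihedral_group n) {y}"
  proof
    show "generate (dihedral_group n) {\<one>\<^bsub>dihedral_group n\<^esub>, y} \<subseteq> generate (dihedral_group n) {y}"
      using yc by (intro group.generate_subgroup_incl[OF G] group.generate_is_subgroup[OF G]) (auto intro: generate.one generate.incl)
    show "generate (dihedral_group n) {y} \<subseteq> generate (dihedral_group n) {\<one>\<^bsub>dihedral_group n\<^esub>, y}"
      by (rule group.mono_generate[OF G]) auto
  qed
  then have "subgroup_generated (dihedral_group n) {\<one>\<^bsub>dihedral_group n\<^esub>, y} = subgroup_generated (dihedral_group n) {y}"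
  proof -
    have "\<one>\<^bsub>dihedral_group n\<^esub> \<in> carrier (dihedral_group n)" using n0 by (simp add: dih_one delt_carrier)
    then have "carrier (dihedral_group n) \<inter> {\<one>\<^bsub>dihedral_group n\<^esub>, y} = {\<one>\<^bsub>dihedral_group n\<^esub>, y}"
      "carrier (dihedral_group n) \<inter> {y} = {y}" using yc by auto
    then show ?thesis using \<open>generate (dihedral_group n) {\<one>\<^bsub>dihedral_group n\<^esub>, y} = generate (dihedral_group n) {y}\<close>
      by (simp add: subgroup_generated_def)
  qed
  then show ?thesis by (simp add: group.cyclic_group_generated[OF G])
qed

lemma cyclic_rot:
  assumes n0: "0 < n" and xc: "x \<in> carrier (dihedral_group n)" and yc: "y \<in> carrier (dihedral_group n)"
    and xs: "\<not> snd x" and ys: "\<not> snd y"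
  shows "cyclic_group (subgroup_generated (dihedral_group n) {x, y})"
proof -
  have G: "group (dihedral_group n)" by (rule dih_group[OF n0])
  define i where "i = int (fst x)"
  define j where "j = int (fst y)"
  have xi: "x = delt n i False" using carrier_delt[OF xc] xs by (simp add: i_def)
  have yj: "y = delt n j False" using carrier_delt[OF yc] ys by (simp add: j_def)
  define d where "d = gcd i j"
  obtain u v where uv: "u * i + v * j = d" using bezout_int[of i j] by (auto simp: d_def)
  define z where "z = delt n d False"
  have zc: "z \<in> carrier (dihedral_group n)" using n0 by (simp add: z_def delt_carrier)
  have "x = z [^]\<^bsub>dihedral_group n\<^esub> (i div d)"
    using n0 by (simp add: z_def dih_pow_int xi d_def)
  then have xz: "x \<in> generate (dihedral_group n) {z}"
    using zc by (auto simp: group.generate_pow[OF G])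
  have "y = z [^]\<^bsub>dihedral_group n\<^esub> (j div d)"
    using n0 by (simp add: z_def dih_pow_int yj d_def)
  then have yz: "y \<in> generate (dihedral_group n) {z}"
    using zc by (auto simp: group.generate_pow[OF G])
  have "z = x [^]\<^bsub>dihedral_group n\<^esub> u \<otimes>\<^bsub>dihedral_group n\<^esub> y [^]\<^bsub>dihedral_group n\<^esub> v"
    using n0 by (simp add: xi yj z_def dih_pow_int delt_mult uv[symmetric] mult.commute)
  moreover have "x [^]\<^bsub>dihedral_group n\<^esub> u \<in> generate (dihedral_group n) {x, y}"
    using xc yc by (intro group.subgroup_int_pow_closed[OF G] group.generate_is_subgroup[OF G]) (auto intro: generate.incl)
  moreover have "y [^]\<^bsub>dihedral_group n\<^esub> v \<in> generate (dihedral_group n) {x, y}"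
    using xc yc by (intro group.subgroup_int_pow_closed[OF G] group.generate_is_subgroup[OF G]) (auto intro: generate.incl)
  ultimately have zxy: "z \<in> generate (dihedral_group n) {x, y}" by (simp add: generate.eng)
  have "generate (dihedral_group n) {x, y} = generate (dihedral_group n) {z}"
  proof
    show "generate (dihedral_group n) {x, y} \<subseteq> generate (dihedral_group n) {z}"
      using zc xz yz by (intro group.generate_subgroup_incl[OF G] group.generate_is_subgroup[OF G]) auto
    show "generate (dihedral_group n) {z} \<subseteq> generate (dihedral_group n) {x, y}"
      using xc yc zxy by (intro group.generate_subgroup_incl[OF G] group.generate_is_subgroup[OF G]) auto
  qed
  then have "subgroup_generated (dihedral_group n) {x, y} = subgroup_generated (dihedral_group n) {z}"
    using xc yc zc by (simp add: subgroup_generated_def Int_absorb1)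
  then show ?thesis by (simp add: group.cyclic_group_generated[OF G])
qed

lemma ar1:
  fixes i j :: int
  assumes ev: "even n" and n0: "0 < n" and j0: "0 \<le> j" and jn: "j < int n" and jne: "j \<noteq> 0"
    and h: "(i - j) mod int n = (j + i) mod int n"
  shows "j = int (n div 2)"
proof -
  obtain M where M: "n = 2 * M" using ev by blast
  have "int n dvd (j + i) - (i - j)" using h by (simp add: mod_eq_dvd_iff)
  then have "2 * int M dvd 2 * j" by (simp add: M)
  then have "int M dvd j" by (simp add: dvd_mult_cancel_left)
  then obtain c where c: "j = int M * c" by (auto simp: dvd_def)
  have M0: "0 < int M" using n0 M by simp
  have "0 < j" using j0 jne by simp
  then have "0 < int M * c" using c by simp
  then have c0: "0 < c" using M0 by (simp add: zero_less_mult_iff)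
  have "int M * c < int M * 2" using jn c M by simp
  then have "c < 2" using M0 by simp
  then have "c = 1" using c0 by simp
  then show ?thesis using c M by simp
qed

lemma ar2:
  fixes i j :: int
  assumes ev: "even n" and n0: "0 < n"
    and h: "(i - j) mod int n = (j - i) mod int n" and ne: "i mod int n \<noteq> j mod int n"
  shows "(i - j) mod int n = int (n div 2) mod int n"
proof -
  obtain M where M: "n = 2 * M" using ev by blast
  have M0: "0 < int M" using n0 M by simp
  have e2: "(i - j) - (j - i) = 2 * (i - j)" by simp
  have "int n dvd (i - j) - (j - i)" using h by (simp only: mod_eq_dvd_iff)
  then have "int n dvd 2 * (i - j)" by (simp only: e2)
  then obtain c0 where "2 * (i - j) = int n * c0" by (auto simp: dvd_def)
  then have "i - j = int M * c0" using M by simp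
  then obtain c where c: "i - j = int M * c" by blast
  have nn: "int n = int M * 2" using M by simp
  have "(i - j) mod int n = (int M * c) mod (int M * 2)" by (simp only: c nn)
  also have "\<dots> = int M * (c mod 2)" by (simp only: mult_mod_right)
  finally have e: "(i - j) mod int n = int M * (c mod 2)" .
  have "c mod 2 = 0 \<or> c mod 2 = 1" by presburger
  moreover have "(i - j) mod int n \<noteq> 0"
    using ne by (simp add: mod_eq_dvd_iff dvd_eq_mod_eq_0[symmetric])
  ultimately have "(i - j) mod int n = int M" using e by auto
  moreover have "int (n div 2) mod int n = int M" using M M0 by simp
  ultimately show ?thesis by simp
qed

lemma transport_group:
  fixes G :: "('a,'b) monoid_scheme" and f :: "'a \<Rightarrow> 'c"
  assumes G: "group G" and gf: "\<And>x. x \<in> carrier G \<Longrightarrow> g (f x) = x"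
    and fg: "\<And>y. y \<in> S \<Longrightarrow> f (g y) = y" and fS: "\<And>x. x \<in> carrier G \<Longrightarrow> f x \<in> S"
    and gS: "\<And>y. y \<in> S \<Longrightarrow> g y \<in> carrier G"
  shows "group \<lparr>carrier = S, monoid.mult = (\<lambda>x y. f (g x \<otimes>\<^bsub>G\<^esub> g y)), one = f \<one>\<^bsub>G\<^esub>\<rparr>"
proof -
  interpret G: group G by (rule G)
  show ?thesis
  proof (rule groupI, goal_cases)
    case (1 x y) then show ?case using gS fS by simp
  next
    case 2 then show ?case using fS by simp
  next
    case (3 x y z) then show ?case using gS fS gf by (simp add: G.m_assoc)
  next
    case (4 x) then show ?case using gS fS gf fg by simp
  next
    case (5 x)
    then show ?case using gS fS gf fg
      by (intro bexI[of _ "f (inv\<^bsub>G\<^esub> (g x))"]) auto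
  qed
qed

lemma transport_inv:
  fixes G :: "('a,'b) monoid_scheme" and f :: "'a \<Rightarrow> 'c"
  assumes G: "group G" and gf: "\<And>x. x \<in> carrier G \<Longrightarrow> g (f x) = x"
    and fg: "\<And>y. y \<in> S \<Longrightarrow> f (g y) = y" and fS: "\<And>x. x \<in> carrier G \<Longrightarrow> f x \<in> S"
    and gS: "\<And>y. y \<in> S \<Longrightarrow> g y \<in> carrier G" and y: "y \<in> S"
  shows "inv\<^bsub>\<lparr>carrier = S, monoid.mult = (\<lambda>x y. f (g x \<otimes>\<^bsub>G\<^esub> g y)), one = f \<one>\<^bsub>G\<^esub>\<rparr>\<^esub> y = f (inv\<^bsub>G\<^esub> (g y))"
proof -
  interpret G: group G by (rule G)
  show ?thesis
  apply (rule group.inv_equality[OF transport_group[OF assms(1-5)]])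
    using gS fS gf fg y by auto
qed

definition enc :: "nat \<Rightarrow> nat \<times> bool \<Rightarrow> nat" where
  "enc n x = (if snd x then fst x + 2 * n else fst x)"
definition dec :: "nat \<Rightarrow> nat \<Rightarrow> nat \<times> bool" where
  "dec n y = (if y < 2 * n then (y, False) else (y - 2 * n, True))"
definition bigH :: "nat \<Rightarrow> nat monoid" where
  "bigH n = \<lparr>carrier = {..<4 * n},
     monoid.mult = (\<lambda>x y. enc n (dec n x \<otimes>\<^bsub>dihedral_group (2 * n)\<^esub> dec n y)),
     one = enc n \<one>\<^bsub>dihedral_group (2 * n)\<^esub>\<rparr>"
definition qq :: "nat \<Rightarrow> nat \<Rightarrow> nat \<times> bool" where
  "qq n y = (fst (dec n y) mod n, snd (dec n y))"

lemma enc_dec_facts: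
  shows "\<And>x. x \<in> carrier (dihedral_group (2*n)) \<Longrightarrow> dec n (enc n x) = x"
    and "\<And>y. y \<in> {..<4*n} \<Longrightarrow> enc n (dec n y) = y"
    and "\<And>x. x \<in> carrier (dihedral_group (2*n)) \<Longrightarrow> enc n x \<in> {..<4*n}"
    and "\<And>y. y \<in> {..<4*n} \<Longrightarrow> dec n y \<in> carrier (dihedral_group (2*n))"
  by (auto simp: enc_def dec_def dihedral_group_def)

lemma delt2_carrier: "0 < n \<Longrightarrow> delt (2*n) k s \<in> carrier (dihedral_group (2*n))"
  by (rule delt_carrier) simp

lemma enc_delt_lt: "0 < n \<Longrightarrow> enc n (delt (2*n) k s) < 4*n"
  using enc_dec_facts(3)[OF delt2_carrier] by simp

lemma enc_delt_carrier: "0 < n \<Longrightarrow> enc n (delt (2*n) k s) \<in> carrier (bigH n)"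
  using enc_delt_lt by (simp add: bigH_def)

lemma dec_enc_delt: "0 < n \<Longrightarrow> dec n (enc n (delt (2*n) k s)) = delt (2*n) k s"
  using enc_dec_facts(1)[OF delt2_carrier] by simp

lemma bigH_group: "0 < n \<Longrightarrow> group (bigH n)"
  unfolding bigH_def
  by (rule transport_group[OF dih_group enc_dec_facts]) auto

lemma bigH_inv: "0 < n \<Longrightarrow> y \<in> carrier (bigH n) \<Longrightarrow>
   inv\<^bsub>bigH n\<^esub> y = enc n (inv\<^bsub>dihedral_group (2*n)\<^esub> (dec n y))"
  unfolding bigH_def
  by (rule transport_inv[OF dih_group enc_dec_facts]) auto

lemma qq_delt: assumes "0 < n" shows "qq n (enc n (delt (2*n) k s)) = delt n k s"
proof -
  have "delt (2*n) k s \<in> carrier (dihedral_group (2*n))" using assms by (simp add: delt_carrier)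
  then have d: "dec n (enc n (delt (2*n) k s)) = delt (2*n) k s" by (simp add: enc_dec_facts)
  have "0 \<le> k mod (2 * int n)" using assms by simp
  then have "int (nat (k mod int (2 * n)) mod n) = (k mod (2 * int n)) mod int n"
    by (simp add: zmod_int)
  also have "\<dots> = k mod int n" by (simp add: mod_mod_cancel)
  finally have "nat (k mod int (2 * n)) mod n = nat (k mod int n)" by linarith
  then show ?thesis unfolding qq_def d by (simp add: delt_def)
qed

lemma bigH_elt: assumes "0 < n" and "x \<in> carrier (bigH n)"
  obtains k s where "x = enc n (delt (2*n) k s)"
proof -
  have "dec n x \<in> carrier (dihedral_group (2*n))" using assms by (simp add: bigH_def enc_dec_facts)
  then obtain k s where xk: "dec n x = delt (2*n) k s" by (metis dih_cases)
  have "x = enc n (delt (2*n) k s)" using assms xk by (metis bigH_def enc_dec_facts(2) partial_object.select_convs(1))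
  then show ?thesis using that by blast
qed

lemma qq_hom: assumes "0 < n" shows "qq n \<in> hom (bigH n) (dihedral_group n)"
proof (rule homI)
  fix x assume "x \<in> carrier (bigH n)"
  then obtain k s where "x = enc n (delt (2*n) k s)" using bigH_elt[OF assms] by blast
  then show "qq n x \<in> carrier (dihedral_group n)" using assms by (simp add: qq_delt delt_carrier)
next
  fix x y assume x: "x \<in> carrier (bigH n)" and y: "y \<in> carrier (bigH n)"
  obtain k s where ex: "x = enc n (delt (2*n) k s)" using bigH_elt[OF assms x] by blast
  obtain l t where ey: "y = enc n (delt (2*n) l t)" using bigH_elt[OF assms y] by blast
  have "x \<otimes>\<^bsub>bigH n\<^esub> y = enc n (delt (2*n) (if s then k - l else k + l) (s \<noteq> t))"
    using assms by (simp add: ex ey bigH_def dec_enc_delt delt_mult)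
  then show "qq n (x \<otimes>\<^bsub>bigH n\<^esub> y) = qq n x \<otimes>\<^bsub>dihedral_group n\<^esub> qq n y"
    using assms by (simp add: ex ey qq_delt delt_mult)
qed

lemma bigH_mult: "0 < n \<Longrightarrow> enc n (delt (2*n) k s) \<otimes>\<^bsub>bigH n\<^esub> enc n (delt (2*n) l t)
   = enc n (delt (2*n) (if s then k - l else k + l) (s \<noteq> t))"
  by (simp add: bigH_def dec_enc_delt delt_mult)

lemma bigH_inv_delt: "0 < n \<Longrightarrow> inv\<^bsub>bigH n\<^esub> (enc n (delt (2*n) k s))
   = enc n (delt (2*n) (if s then k else - k) s)"
proof -
  assume n: "0 < n"
  have "inv\<^bsub>bigH n\<^esub> (enc n (delt (2*n) k s)) = enc n (inv\<^bsub>dihedral_group (2*n)\<^esub> (dec n (enc n (delt (2*n) k s))))"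
    by (rule bigH_inv[OF n enc_delt_carrier[OF n]])
  also have "\<dots> = enc n (inv\<^bsub>dihedral_group (2*n)\<^esub> (delt (2*n) k s))" by (simp only: dec_enc_delt[OF n])
  also have "\<dots> = enc n (delt (2*n) (if s then k else - k) s)" using dih_inv[of "2*n" k s] n by simp
  finally show ?thesis .
qed

lemma enc_delt_eq: "0 < n \<Longrightarrow> enc n (delt (2*n) k s) = enc n (delt (2*n) l t) \<longleftrightarrow>
   (k mod int (2*n) = l mod int (2*n) \<and> s = t)"
proof -
  assume n: "0 < n"
  have "enc n (delt (2*n) k s) = enc n (delt (2*n) l t) \<longleftrightarrow> delt (2*n) k s = delt (2*n) l t"
    by (metis dec_enc_delt[OF n])
  also have "\<dots> \<longleftrightarrow> (k mod int (2*n) = l mod int (2*n) \<and> s = t)"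
    by (rule delt_eq) (use n in simp)
  finally show ?thesis .
qed

lemma multiplier_ge2:
  assumes ev: "even n" and n4: "n \<ge> 4"
  shows "stem_extension (bigH n) (dihedral_group n) (qq n) \<and> finite (carrier (bigH n))
     \<and> card (kernel (bigH n) (dihedral_group n) (qq n)) = 2"
proof -
  have n0: "0 < n" using n4 by simp
  interpret G: group "bigH n" by (rule bigH_group[OF n0])
  define z where "z = enc n (delt (2*n) (int n) False)"
  define o1 where "o1 = enc n (delt (2*n) 0 False)"
  have o1one: "o1 = \<one>\<^bsub>bigH n\<^esub>" by (simp add: o1_def bigH_def dih_one)
  have ker: "kernel (bigH n) (dihedral_group n) (qq n) = {o1, z}"
  proof (intro equalityI subsetI)
    fix x assume "x \<in> kernel (bigH n) (dihedral_group n) (qq n)"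
    then have x: "x \<in> carrier (bigH n)" and q: "qq n x = delt n 0 False" by (auto simp: kernel_def dih_one)
    obtain k s where xk: "x = enc n (delt (2*n) k s)" using bigH_elt[OF n0 x] by blast
    have "k mod int n = 0" "\<not> s" using q n0 by (simp_all add: xk qq_delt delt_eq)
    have e: "k mod (2 * int n) = int n * (k div int n mod 2) + k mod int n"
      using mod_mult2_eq'[of k n 2] by (simp add: mult.commute)
    have "k div int n mod 2 = 0 \<or> k div int n mod 2 = 1" by presburger
    then have "k mod (2 * int n) = 0 \<or> k mod (2 * int n) = int n"
      using e \<open>k mod int n = 0\<close> by auto
    then show "x \<in> {o1, z}" using \<open>\<not> s\<close> n0 by (auto simp: xk o1_def z_def enc_delt_eq)
  next
    fix x assume "x \<in> {o1, z}"
    then show "x \<in> kernel (bigH n) (dihedral_group n) (qq n)"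
      using n0 by (auto simp: kernel_def o1_def z_def qq_delt dih_one delt_eq enc_delt_carrier)
  qed
  have oz: "o1 \<noteq> z" using n0 by (simp add: o1_def z_def enc_delt_eq)
  have zc: "z \<in> carrier (bigH n)" using n0 by (simp add: z_def enc_delt_carrier)
  have zcent: "z \<in> group_center (bigH n)"
    unfolding group_center_def
  proof (intro CollectI conjI ballI zc)
    fix g assume g: "g \<in> carrier (bigH n)"
    obtain k s where gk: "g = enc n (delt (2*n) k s)" using bigH_elt[OF n0 g] by blast
    have e: "(k - int n) mod (2 * int n) = (k + int n) mod (2 * int n)"
    proof -
      have h: "k + int n = (k - int n) + 2 * int n" by simp
      show ?thesis by (simp only: h mod_add_self2)
    qed
    show "z \<otimes>\<^bsub>bigH n\<^esub> g = g \<otimes>\<^bsub>bigH n\<^esub> z"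
      using n0 by (simp add: z_def gk bigH_mult enc_delt_eq e add.commute)
  qed
  have zder: "z \<in> derived (bigH n) (carrier (bigH n))"
  proof -
    obtain m where m: "n = 2 * m" using ev by blast
    define a where "a = enc n (delt (2*n) (int m) False)"
    define b where "b = enc n (delt (2*n) 0 True)"
    have ab: "a \<in> carrier (bigH n)" "b \<in> carrier (bigH n)"
      using n0 by (simp_all add: a_def b_def enc_delt_carrier)
    have "a \<otimes>\<^bsub>bigH n\<^esub> b \<otimes>\<^bsub>bigH n\<^esub> inv\<^bsub>bigH n\<^esub> a \<otimes>\<^bsub>bigH n\<^esub> inv\<^bsub>bigH n\<^esub> b = z"
    proof -
      have hm: "int m + int m = int n" "2 * int m = int n" using m by simp_all
      show ?thesis using n0 by (simp add: a_def b_def z_def bigH_inv_delt bigH_mult enc_delt_eq hm)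
    qed
    then have "z \<in> derived_set (bigH n) (carrier (bigH n))" using ab by blast
    then show ?thesis unfolding derived_def by (rule generate.incl)
  qed
  have o1der: "o1 \<in> derived (bigH n) (carrier (bigH n))"
    unfolding derived_def o1one by (rule generate.one)
  have o1cent: "o1 \<in> group_center (bigH n)" by (simp add: o1one group_center_def)
  have epi: "qq n \<in> epi (bigH n) (dihedral_group n)"
  proof -
    have "qq n ` carrier (bigH n) = carrier (dihedral_group n)"
    proof (intro equalityI subsetI)
      fix y assume "y \<in> qq n ` carrier (bigH n)"
      then show "y \<in> carrier (dihedral_group n)" using qq_hom[OF n0] by (auto simp: hom_def)
    next
      fix y assume "y \<in> carrier (dihedral_group n)"
      then obtain k s where "y = delt n k s" by (metis dih_cases)
      moreover have "enc n (delt (2*n) k s) \<in> carrier (bigH n)"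
        using n0 by (simp add: enc_delt_carrier)
      ultimately show "y \<in> qq n ` carrier (bigH n)" using n0 by (metis image_eqI qq_delt)
    qed
    then show ?thesis using qq_hom[OF n0] by (simp add: epi_def)
  qed
  show ?thesis
    unfolding stem_extension_def
    using ker oz zcent zder o1der o1cent epi bigH_group[OF n0]
    by (auto simp: bigH_def)
qed

lemma lc_swap: "(\<exists>x'\<in>A. \<exists>y'\<in>A. f x' = x \<and> f y' = y \<and> m x' y' = m y' x') \<Longrightarrow> (\<exists>x'\<in>A. \<exists>y'\<in>A. f x' = y \<and> f y' = x \<and> m x' y' = m y' x')"
proof -
  assume "\<exists>x'\<in>A. \<exists>y'\<in>A. f x' = x \<and> f y' = y \<and> m x' y' = m y' x'"
  then obtain x' y' where h: "x' \<in> A" "y' \<in> A" "f x' = x" "f y' = y" "m x' y' = m y' x'" by blast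
  show ?thesis
  proof (rule bexI[where x=y'])
    show "\<exists>y'a\<in>A. f y' = y \<and> f y'a = x \<and> m y' y'a = m y'a y'"
      by (rule bexI[where x=x']) (use h in auto)
  qed (use h in auto)
qed

theorem theorem5p3:
  fixes n :: nat and H :: "('c, 'd) monoid_scheme" and q :: "'c \<Rightarrow> nat \<times> bool"
  assumes "even n" and "n \<ge> 4"
    and "schur_cover H (dihedral_group n) q"
  shows "deep_commuting_graph H (dihedral_group n) q = enhanced_power_graph (dihedral_group n)"
proof -
  note ev = assms(1) and n4 = assms(2)
  have n0: "0 < n" using n4 by simp
  have st: "stem_extension H (dihedral_group n) q" and maxK:
    "\<And>(H' :: nat monoid) (q' :: nat \<Rightarrow> nat \<times> bool). stem_extension H' (dihedral_group n) q' \<and> finite (carrier H') \<Longrightarrow>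
        card (kernel H' (dihedral_group n) q') \<le> card (kernel H (dihedral_group n) q)"
    using assms(3) unfolding schur_cover_def by blast+
  have grpH: "group H" and ep: "q \<in> epi H (dihedral_group n)"
    and KcKd: "kernel H (dihedral_group n) q \<subseteq> group_center H \<inter> derived H (carrier H)"
    using st unfolding stem_extension_def by blast+
  have hq: "q \<in> hom H (dihedral_group n)" and sq: "q ` carrier H = carrier (dihedral_group n)"
    using ep by (simp_all add: epi_def)
  have K2: "2 \<le> card (kernel H (dihedral_group n) q)"
    using maxK[of "bigH n" "qq n"] multiplier_ge2[OF ev n4] by simp
  have core: "b \<otimes>\<^bsub>H\<^esub> u \<noteq> u \<otimes>\<^bsub>H\<^esub> b"
    if "b \<in> carrier H" "snd (q b)" "u \<in> carrier H" "q u = delt n (int (n div 2)) False" for b u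
    using group.core[OF grpH ev n4 hq sq _ _ K2] KcKd that by blast
  interpret h: group_hom H "dihedral_group n" q
    by (simp add: group_hom_def group_hom_axioms_def grpH dih_group[OF n0] hq)
  have Dgrp: "group (dihedral_group n)" by (rule dih_group[OF n0])
  obtain a where ac: "a \<in> carrier H" and aq: "q a = delt n 1 False"
    using sq delt_carrier[OF n0, of 1 False] by (metis imageE)
  have one_D: "\<one>\<^bsub>dihedral_group n\<^esub> = delt n 0 False" by (rule dih_one)
  have rotlift: "q (a [^]\<^bsub>H\<^esub> (fst x)) = x" if "x \<in> carrier (dihedral_group n)" "\<not> snd x" for x
  proof -
    have "q (a [^]\<^bsub>H\<^esub> (fst x)) = delt n (int (fst x)) False"
      using ac n0 by (simp add: h.hom_nat_pow aq dih_pow_nat)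
    also have "\<dots> = x" using carrier_delt[OF that(1)] that(2) by simp
    finally show ?thesis .
  qed
  define lc where "lc x y \<longleftrightarrow> (\<exists>x' \<in> carrier H. \<exists>y' \<in> carrier H. q x' = x \<and> q y' = y \<and>
                  x' \<otimes>\<^bsub>H\<^esub> y' = y' \<otimes>\<^bsub>H\<^esub> x')" for x y
  define good where "good x y \<longleftrightarrow> (\<not> snd x \<and> \<not> snd y) \<or> x = \<one>\<^bsub>dihedral_group n\<^esub> \<or> y = \<one>\<^bsub>dihedral_group n\<^esub>" for x y
  have lc_sym1: "lc y x" if "lc x y" for x y
    using that unfolding lc_def by (rule lc_swap)
  have lc_sym: "lc x y \<longleftrightarrow> lc y x" for x y using lc_sym1 by blast
  have good_pos: "lc x y \<and> cyclic_group (subgroup_generated (dihedral_group n) {x, y})"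
    if xc: "x \<in> carrier (dihedral_group n)" and yc: "y \<in> carrier (dihedral_group n)" and g: "good x y" for x y
  proof (cases "x = \<one>\<^bsub>dihedral_group n\<^esub>")
    case True
    obtain y' where y': "y' \<in> carrier H" "q y' = y" using sq yc by (metis imageE)
    have "lc x y" unfolding lc_def using True y' by (intro bexI[of _ "\<one>\<^bsub>H\<^esub>"] bexI[of _ y']) auto
    then show ?thesis using True cyclic_one[OF n0 yc] by simp
  next
    case False
    show ?thesis
    proof (cases "y = \<one>\<^bsub>dihedral_group n\<^esub>")
      case True
      obtain x' where x': "x' \<in> carrier H" "q x' = x" using sq xc by (metis imageE)
      have "lc x y" unfolding lc_def using True x' by (intro bexI[of _ x'] bexI[of _ "\<one>\<^bsub>H\<^esub>"]) auto
      moreover have "{x, y} = {\<one>\<^bsub>dihedral_group n\<^esub>, x}" using True by auto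
      ultimately show ?thesis using cyclic_one[OF n0 xc] by simp
    next
      case False2: False
      have rs: "\<not> snd x" "\<not> snd y" using g False False2 by (auto simp: good_def)
      have "lc x y" unfolding lc_def
        using rotlift[OF xc rs(1)] rotlift[OF yc rs(2)] ac
        by (intro bexI[of _ "a [^]\<^bsub>H\<^esub> (fst x)"] bexI[of _ "a [^]\<^bsub>H\<^esub> (fst y)"])
           (auto simp: monoid.nat_pow_comm[OF group.is_monoid[OF grpH]])
      then show ?thesis using cyclic_rot[OF n0 xc yc rs] by simp
    qed
  qed
  have refl_neg: "\<not> lc x y \<and> \<not> cyclic_group (subgroup_generated (dihedral_group n) {x, y})"
    if xc: "x \<in> carrier (dihedral_group n)" and yc: "y \<in> carrier (dihedral_group n)"
      and xs: "snd x" and y1: "y \<noteq> \<one>\<^bsub>dihedral_group n\<^esub>" and yx: "y \<noteq> x" for x y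
  proof
    show "\<not> cyclic_group (subgroup_generated (dihedral_group n) {x, y})"
      by (rule not_cyclic[OF n0 xc yc xs y1 yx])
    show "\<not> lc x y"
    proof
      assume "lc x y"
      then obtain x' y' where x': "x' \<in> carrier H" "q x' = x" and y': "y' \<in> carrier H" "q y' = y"
        and cm: "x' \<otimes>\<^bsub>H\<^esub> y' = y' \<otimes>\<^bsub>H\<^esub> x'" unfolding lc_def by blast
      have cmD: "x \<otimes>\<^bsub>dihedral_group n\<^esub> y = y \<otimes>\<^bsub>dihedral_group n\<^esub> x"
        using cm x' y' by (metis h.hom_mult)
      define i where "i = int (fst x)"
      define j where "j = int (fst y)"
      have xi: "x = delt n i True" using carrier_delt[OF xc] xs by (simp add: i_def)
      have j0: "0 \<le> j" "j < int n" using yc by (auto simp: j_def dihedral_group_def)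
      show False
      proof (cases "snd y")
        case False
        have yj: "y = delt n j False" using carrier_delt[OF yc] False by (simp add: j_def)
        have "(i - j) mod int n = (j + i) mod int n" using cmD n0 by (simp add: xi yj delt_mult delt_eq)
        moreover have "j \<noteq> 0" using y1 by (auto simp: yj one_D)
        ultimately have "j = int (n div 2)" using ar1[OF ev n0 j0] by blast
        then have "q y' = delt n (int (n div 2)) False" using y' yj by simp
        then show False using core[OF x'(1) _ y'(1)] x' xs cm by simp
      next
        case True
        have yj: "y = delt n j True" using carrier_delt[OF yc] True by (simp add: j_def)
        have "(i - j) mod int n = (j - i) mod int n" using cmD n0 by (simp add: xi yj delt_mult delt_eq)
        moreover have "i mod int n \<noteq> j mod int n" using yx n0 by (auto simp: xi yj delt_eq)
        ultimately have e: "(i - j) mod int n = int (n div 2) mod int n" using ar2[OF ev n0] by blast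
        have uc: "x' \<otimes>\<^bsub>H\<^esub> y' \<in> carrier H" using x' y' grpH by (simp add: group.subgroupE(4) group.subgroup_self)
        have "q (x' \<otimes>\<^bsub>H\<^esub> y') = delt n (i - j) False" using x' y' n0 by (simp add: xi yj delt_mult)
        also have "\<dots> = delt n (int (n div 2)) False" using e n0 by (simp add: delt_eq)
        finally have uq: "q (x' \<otimes>\<^bsub>H\<^esub> y') = delt n (int (n div 2)) False" .
        have "x' \<otimes>\<^bsub>H\<^esub> (x' \<otimes>\<^bsub>H\<^esub> y') = x' \<otimes>\<^bsub>H\<^esub> (y' \<otimes>\<^bsub>H\<^esub> x')"
          using cm by simp
        also have "\<dots> = (x' \<otimes>\<^bsub>H\<^esub> y') \<otimes>\<^bsub>H\<^esub> x'"
          using x' y' by (simp add: monoid.m_assoc[OF group.is_monoid[OF grpH]])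
        finally have "x' \<otimes>\<^bsub>H\<^esub> (x' \<otimes>\<^bsub>H\<^esub> y') = (x' \<otimes>\<^bsub>H\<^esub> y') \<otimes>\<^bsub>H\<^esub> x'" .
        then show False using core[OF x'(1) _ uc uq] x' xs by simp
      qed
    qed
  qed
  have char: "lc x y \<longleftrightarrow> cyclic_group (subgroup_generated (dihedral_group n) {x, y})"
    if xc: "x \<in> carrier (dihedral_group n)" and yc: "y \<in> carrier (dihedral_group n)" and xy: "x \<noteq> y" for x y
  proof (cases "good x y")
    case True then show ?thesis using good_pos[OF xc yc] by blast
  next
    case False
    then have y1: "y \<noteq> \<one>\<^bsub>dihedral_group n\<^esub>" and x1: "x \<noteq> \<one>\<^bsub>dihedral_group n\<^esub>"
      and s: "snd x \<or> snd y" by (auto simp: good_def)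
    show ?thesis
    proof (cases "snd x")
      case True then show ?thesis using refl_neg[OF xc yc True y1] xy by auto
    next
      case False
      then have "snd y" using s by simp
      then have "\<not> lc y x \<and> \<not> cyclic_group (subgroup_generated (dihedral_group n) {y, x})"
        using refl_neg[OF yc xc _ x1] xy by auto
      moreover have "{y, x} = {x, y}" by auto
      ultimately show ?thesis using lc_sym by auto
    qed
  qed
  show ?thesis
  proof (rule Set.set_eqI)
    fix p :: "(nat \<times> bool) \<times> (nat \<times> bool)"
    obtain x y where p: "p = (x, y)" by (cases p)
    have e1: "(x, y) \<in> deep_commuting_graph H (dihedral_group n) q \<longleftrightarrow>
        x \<in> carrier (dihedral_group n) \<and> y \<in> carrier (dihedral_group n) \<and> x \<noteq> y \<and> lc x y"
      by (simp add: deep_commuting_graph_def lc_def)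
    have e2: "(x, y) \<in> enhanced_power_graph (dihedral_group n) \<longleftrightarrow>
        x \<in> carrier (dihedral_group n) \<and> y \<in> carrier (dihedral_group n) \<and> x \<noteq> y \<and>
        cyclic_group (subgroup_generated (dihedral_group n) {x, y})"
      by (simp add: enhanced_power_graph_def)
    show "p \<in> deep_commuting_graph H (dihedral_group n) q \<longleftrightarrow> p \<in> enhanced_power_graph (dihedral_group n)"
      unfolding p e1 e2 using char by blast
  qed
qed

end
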